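(* Let $q,m\ge0$, $k\ge1$ be integers, $\zeta$ a root of unity with $\zeta^{3^k-1}=1$, and let $(c,a)\in Z(q,m,\zeta)$ be such that $Q_{c,a}=\zeta P^m_{c,a}+(1-\zeta)\frac c2$ commutes with $P^k_{c,a}$. Then $$Q_{c,a}\big(\mathrm{Crit}(P^{k+m}_{c,a})\big)=Q_{c,a}\big(\mathrm{Crit}(P^m_{c,a})\big)\cup\mathrm{Crit}(P^k_{c,a}).$$
   Context: $P_{c,a}(z)=\frac13z^3-\frac c2z^2+a^3$, $(c,a)\in\mathbb{C}^2$, with critical points $c_0=0$, $c_1=c$; $\mathrm{Crit}(R)$ denotes the set of critical points of a polynomial $R$ (with $\mathrm{Crit}(P^0)=\emptyset$). For integers $q,m\ge0$ and a root of unity $\zeta$, $Z(q,m,\zeta)$ is the set of $(c,a)$ such that $Q_{c,a}:=\zeta P^m_{c,a}+(1-\zeta)\frac c2$ commutes with all iterates $P^j_{c,a}$ ($j\ge1$) with $\zeta^{3^j}=\zeta$, and either $Q_{c,a}(P^q_{c,a}(c_0))=P^q_{c,a}(c_1)$ or $Q_{c,a}(P^q_{c,a}(c_1))=P^q_{c,a}(c_0)$. *)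

theory Defs
  imports "HOL-Computational_Algebra.Polynomial"
begin

definition Ppoly :: "complex \<Rightarrow> complex \<Rightarrow> complex poly" where
  "Ppoly c a = [:a ^ 3, 0, - c / 2, 1 / 3:]"

definition Piter :: "complex \<Rightarrow> complex \<Rightarrow> nat \<Rightarrow> complex poly" where
  "Piter c a n = ((\<lambda>p. pcompose (Ppoly c a) p) ^^ n) [:0, 1:]"

text \<open>Critical points of a polynomial: zeros of its derivative.
  (For P^0 = z the derivative is 1, so Crit(P^0) is empty.)\<close>
definition Crit :: "complex poly \<Rightarrow> complex set" where
  "Crit R = {z. poly (pderiv R) z = 0}"

definition Qmap :: "complex \<Rightarrow> nat \<Rightarrow> complex \<Rightarrow> complex \<Rightarrow> complex \<Rightarrow> complex" where
  "Qmap \<zeta> m c a z = \<zeta> * poly (Piter c a m) z + (1 - \<zeta>) * (c / 2)"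

definition commutes :: "(complex \<Rightarrow> complex) \<Rightarrow> (complex \<Rightarrow> complex) \<Rightarrow> bool" where
  "commutes f g \<longleftrightarrow> f \<circ> g = g \<circ> f"

definition root_of_unity :: "complex \<Rightarrow> bool" where
  "root_of_unity \<zeta> \<longleftrightarrow> (\<exists>n>0. \<zeta> ^ n = 1)"

text \<open>The set Z(q,m,zeta); critical points c_0 = 0, c_1 = c.\<close>
definition Zset :: "nat \<Rightarrow> nat \<Rightarrow> complex \<Rightarrow> (complex \<times> complex) set" where
  "Zset q m \<zeta> = {(c, a).
     (\<forall>j\<ge>1. \<zeta> ^ (3 ^ j) = \<zeta> \<longrightarrow> commutes (Qmap \<zeta> m c a) (poly (Piter c a j))) \<and>
     (Qmap \<zeta> m c a (poly (Piter c a q) 0) = poly (Piter c a q) c \<or>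
      Qmap \<zeta> m c a (poly (Piter c a q) c) = poly (Piter c a q) 0)}"

end

theory Submission
  imports Defs "HOL-Computational_Algebra.Fundamental_Theorem_Algebra"
begin

lemma Piter_0: "Piter c a 0 = [:0, 1:]"
  by (simp add: Piter_def)

lemma Piter_Suc: "Piter c a (Suc n) = pcompose (Ppoly c a) (Piter c a n)"
  by (simp add: Piter_def)

lemma Piter_add: "Piter c a (k + m) = pcompose (Piter c a k) (Piter c a m)"
proof (induction k)
  case 0
  then show ?case by (simp add: Piter_0 pcompose_pCons)
next
  case (Suc k)
  then show ?case by (simp add: Piter_Suc pcompose_assoc)
qed

lemma P_surj: "\<exists>z. poly (Ppoly c a) z = w"
proof -
  have "\<exists>z. poly (pCons (a^3 - w) (pCons 0 (pCons (-c/2) [:1/3:]))) z = (0::complex)"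
    by (rule fundamental_theorem_of_algebra_alt) auto
  then obtain z where "poly (pCons (a^3 - w) (pCons 0 (pCons (-c/2) [:1/3:]))) z = 0" by blast
  then have "poly (Ppoly c a) z = w" by (simp add: Ppoly_def algebra_simps)
  then show ?thesis by blast
qed

lemma Piter_surj: "\<exists>z. poly (Piter c a n) z = w"
proof (induction n arbitrary: w)
  case 0
  then show ?case by (simp add: Piter_0)
next
  case (Suc n)
  obtain u where u: "poly (Ppoly c a) u = w" using P_surj by blast
  obtain z where "poly (Piter c a n) z = u" using Suc by blast
  then show ?case using u by (auto simp: Piter_Suc poly_pcompose)
qed

theorem lemma7p2:
  fixes q m k :: nat and \<zeta> c a :: complex
  assumes "k \<ge> 1"
    and "root_of_unity \<zeta>"
    and "\<zeta> ^ (3 ^ k - 1) = 1"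
    and "(c, a) \<in> Zset q m \<zeta>"
    and "commutes (Qmap \<zeta> m c a) (poly (Piter c a k))"
  shows "Qmap \<zeta> m c a ` Crit (Piter c a (k + m))
       = Qmap \<zeta> m c a ` Crit (Piter c a m) \<union> Crit (Piter c a k)"
proof -
  have z0: "\<zeta> \<noteq> 0" using assms(2) unfolding root_of_unity_def by (auto simp: power_0_left)
  define Pk where "Pk = Piter c a k"
  define Pm where "Pm = Piter c a m"
  define Lp where "Lp = [:(1-\<zeta>)*(c/2), \<zeta>:]"
  have Lpoly: "poly Lp w = \<zeta> * w + (1-\<zeta>)*(c/2)" for w
    by (simp add: Lp_def algebra_simps)
  have Q: "Qmap \<zeta> m c a z = poly Lp (poly Pm z)" for z
    by (simp add: Qmap_def Lpoly Pm_def)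
  have kmc: "poly Pm (poly Pk z) = poly Pk (poly Pm z)" for z
  proof -
    have "poly Pm (poly Pk z) = poly (Piter c a (m+k)) z"
      by (simp add: Piter_add poly_pcompose Pm_def Pk_def)
    also have "\<dots> = poly (Piter c a (k+m)) z" by (simp add: add.commute)
    also have "\<dots> = poly Pk (poly Pm z)"
      by (simp add: Piter_add poly_pcompose Pm_def Pk_def)
    finally show ?thesis .
  qed
  have comm: "poly Lp (poly Pk w) = poly Pk (poly Lp w)" for w
  proof -
    obtain z where z: "poly Pm z = w" using Piter_surj unfolding Pm_def by blast
    have "Qmap \<zeta> m c a (poly Pk z) = poly Pk (Qmap \<zeta> m c a z)"
      using assms(5) unfolding commutes_def Pk_def by (metis comp_apply)
    then show ?thesis using z by (simp add: Q kmc)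
  qed
  have peq: "pcompose Lp Pk = pcompose Pk Lp"
    using comm by (simp add: poly_eq_poly_eq_iff[symmetric] fun_eq_iff poly_pcompose)
  have dL: "pderiv Lp = [:\<zeta>:]" by (simp add: Lp_def pderiv_pCons)
  have inv: "poly (pderiv Pk) (poly Lp w) = poly (pderiv Pk) w" for w
  proof -
    have "poly (pderiv (pcompose Lp Pk)) w = poly (pderiv (pcompose Pk Lp)) w"
      using peq by simp
    then have "\<zeta> * poly (pderiv Pk) w = poly (pderiv Pk) (poly Lp w) * \<zeta>"
      by (simp add: pderiv_pcompose dL poly_pcompose)
    then show ?thesis using z0 by simp
  qed
  have critkm: "Crit (Piter c a (k + m)) = {z. poly (pderiv Pk) (poly Pm z) * poly (pderiv Pm) z = 0}"
    by (simp add: Crit_def Piter_add pderiv_pcompose poly_pcompose Pk_def Pm_def)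
  show ?thesis
  proof (intro equalityI subsetI)
    fix y assume "y \<in> Qmap \<zeta> m c a ` Crit (Piter c a (k + m))"
    then obtain z where y: "y = Qmap \<zeta> m c a z"
      and zc: "poly (pderiv Pk) (poly Pm z) * poly (pderiv Pm) z = 0" using critkm by auto
    show "y \<in> Qmap \<zeta> m c a ` Crit (Piter c a m) \<union> Crit (Piter c a k)"
    proof (cases "poly (pderiv Pm) z = 0")
      case True
      then show ?thesis using y by (auto simp: Crit_def Pm_def)
    next
      case False
      then have "poly (pderiv Pk) (poly Pm z) = 0" using zc by simp
      then have "poly (pderiv Pk) y = 0" using inv y Q by simp
      then show ?thesis by (simp add: Crit_def Pk_def)
    qed
  next
    fix y assume "y \<in> Qmap \<zeta> m c a ` Crit (Piter c a m) \<union> Crit (Piter c a k)"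
    then show "y \<in> Qmap \<zeta> m c a ` Crit (Piter c a (k + m))"
    proof
      assume "y \<in> Qmap \<zeta> m c a ` Crit (Piter c a m)"
      then show ?thesis using critkm by (auto simp: Crit_def Pm_def)
    next
      assume "y \<in> Crit (Piter c a k)"
      then have yc: "poly (pderiv Pk) y = 0" by (simp add: Crit_def Pk_def)
      define u where "u = (y - (1-\<zeta>)*(c/2)) / \<zeta>"
      have Lu: "poly Lp u = y" using z0 by (simp add: Lpoly u_def)
      obtain z where z: "poly Pm z = u" using Piter_surj unfolding Pm_def by blast
      have "poly (pderiv Pk) u = 0" using inv[of u] Lu yc by simp
      then have "z \<in> Crit (Piter c a (k + m))" using critkm z by simp
      moreover have "Qmap \<zeta> m c a z = y" using Q z Lu by simp
      ultimately show ?thesis by blast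
    qed
  qed
qed

end
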